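(* Let $R$ be a finite group which is neither an abelian group of exponent greater than $2$ nor a generalized dicyclic group. Then the set $$\{S\subseteq R\mid S=S^{-1},\ R<N_{\mathrm{Aut}(\Gamma(R,S))}(R)\}$$ has cardinality at most $2^{\mathbf{c}(R)-|R|/96+(\log_2|R|)^2}$.
   Context: $\mathbf{I}(R)=\{x\in R\mid x^2=1\}$, $\mathbf{c}(R)=(|R|+|\mathbf{I}(R)|)/2$. The Cayley digraph $\Gamma(R,S)$ has vertex set $R$ and an arc $(g,h)$ iff $hg^{-1}\in S$; $R$ is identified with its right regular representation inside $\mathrm{Aut}(\Gamma(R,S))$, and $N_{\mathrm{Aut}(\Gamma(R,S))}(R)$ is its normalizer. Generalized dicyclic group: for $A$ abelian of even order and exponent $>2$ and $y$ an involution of $A$, $\mathrm{Dic}(A,y,x)=\langle A,x\mid x^2=y,\ x^{-1}ax=a^{-1}\ \forall a\in A\rangle$; a group is generalized dicyclic if isomorphic to some such group. *)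

theory Defs
  imports "HOL-Algebra.Algebra" "HOL-Analysis.Analysis"
begin

definition invol_set :: "('a, 'b) monoid_scheme \<Rightarrow> 'a set" where
  "invol_set G = {x \<in> carrier G. x \<otimes>\<^bsub>G\<^esub> x = \<one>\<^bsub>G\<^esub>}"

definition c_num :: "('a, 'b) monoid_scheme \<Rightarrow> real" where
  "c_num G = (real (card (carrier G)) + real (card (invol_set G))) / 2"

definition subset_inv :: "('a, 'b) monoid_scheme \<Rightarrow> 'a set \<Rightarrow> 'a set" where
  "subset_inv G S = m_inv G ` S"

definition rreg :: "('a, 'b) monoid_scheme \<Rightarrow> 'a \<Rightarrow> 'a \<Rightarrow> 'a" where
  "rreg G r = (\<lambda>x. if x \<in> carrier G then x \<otimes>\<^bsub>G\<^esub> r else x)"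

definition reg_rep :: "('a, 'b) monoid_scheme \<Rightarrow> ('a \<Rightarrow> 'a) set" where
  "reg_rep G = rreg G ` carrier G"

text \<open>Aut(Gamma(R,S)): permutations of the vertex set R (identity off R) preserving
  arcs, where (g,h) is an arc iff h g^{-1} \<in> S.\<close>
definition cay_aut :: "('a, 'b) monoid_scheme \<Rightarrow> 'a set \<Rightarrow> ('a \<Rightarrow> 'a) set" where
  "cay_aut G S = {f. bij_betw f (carrier G) (carrier G)
      \<and> (\<forall>x. x \<notin> carrier G \<longrightarrow> f x = x)
      \<and> (\<forall>g\<in>carrier G. \<forall>h\<in>carrier G.
            (h \<otimes>\<^bsub>G\<^esub> inv\<^bsub>G\<^esub> g \<in> S) \<longleftrightarrow> (f h \<otimes>\<^bsub>G\<^esub> inv\<^bsub>G\<^esub> (f g) \<in> S))}"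

definition cay_normalizer :: "('a, 'b) monoid_scheme \<Rightarrow> 'a set \<Rightarrow> ('a \<Rightarrow> 'a) set" where
  "cay_normalizer G S = {f \<in> cay_aut G S.
      (\<lambda>p. f \<circ> p \<circ> inv_into UNIV f) ` reg_rep G = reg_rep G}"

definition abelian_exp_gt2 :: "('a, 'b) monoid_scheme \<Rightarrow> bool" where
  "abelian_exp_gt2 G \<longleftrightarrow> comm_group G \<and> (\<exists>x\<in>carrier G. x \<otimes>\<^bsub>G\<^esub> x \<noteq> \<one>\<^bsub>G\<^esub>)"

text \<open>Generalized dicyclic group Dic(A,y,x), recognised internally: an abelian subgroup A
  of index 2 of even order and exponent > 2, an element x outside A with x^2 = y an
  involution of A and x^{-1} a x = a^{-1} for all a in A.\<close>
definition gen_dicyclic :: "('a, 'b) monoid_scheme \<Rightarrow> bool" where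
  "gen_dicyclic G \<longleftrightarrow> (\<exists>A x y.
      subgroup A G \<and> (\<forall>a\<in>A. \<forall>b\<in>A. a \<otimes>\<^bsub>G\<^esub> b = b \<otimes>\<^bsub>G\<^esub> a)
      \<and> finite A \<and> even (card A) \<and> (\<exists>a\<in>A. a \<otimes>\<^bsub>G\<^esub> a \<noteq> \<one>\<^bsub>G\<^esub>)
      \<and> x \<in> carrier G \<and> x \<notin> A \<and> carrier G = A \<union> (x <#\<^bsub>G\<^esub> A)
      \<and> y \<in> A \<and> y \<noteq> \<one>\<^bsub>G\<^esub> \<and> y \<otimes>\<^bsub>G\<^esub> y = \<one>\<^bsub>G\<^esub>
      \<and> x \<otimes>\<^bsub>G\<^esub> x = y
      \<and> (\<forall>a\<in>A. inv\<^bsub>G\<^esub> x \<otimes>\<^bsub>G\<^esub> a \<otimes>\<^bsub>G\<^esub> x = inv\<^bsub>G\<^esub> a))"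

end

theory Submission
  imports Defs
begin

context group begin

lemma sub_dvd:
  assumes "subgroup H G" "subgroup K G" "H \<subseteq> K"
  shows "card H dvd card K"
proof -
  interpret K: group "G\<lparr>carrier := K\<rparr>" using subgroup_imp_group assms(2) .
  have "subgroup H (G\<lparr>carrier := K\<rparr>)" using subgroup_incl assms .
  from K.lagrange[OF this] have "card (rcosets\<^bsub>G\<lparr>carrier := K\<rparr>\<^esub> H) * card H = card K"
    by (simp add: Coset.order_def)
  thus ?thesis by (metis dvd_triv_right)
qed

lemma sub_half:
  assumes "subgroup H G" "subgroup K G" "H \<subseteq> K" "finite K" "card K < 2 * card H"
  shows "H = K"
proof -
  obtain q where q: "card K = card H * q" using sub_dvd[OF assms(1-3)] by (auto elim: dvdE)
  have "\<one> \<in> K" using assms(2) subgroup.one_closed by blast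
  hence "card K > 0" using assms(4) card_gt_0_iff by blast
  hence "q \<noteq> 0" using q by auto
  moreover have "q < 2"
  proof (rule ccontr)
    assume "\<not> q < 2" hence "card H * 2 \<le> card H * q" by simp
    thus False using q assms(5) by linarith
  qed
  ultimately have "q = 1" by linarith
  hence "card H = card K" using q by simp
  thus ?thesis using card_subset_eq[OF assms(4) assms(3)] by simp
qed

lemma sub_index:
  assumes "subgroup H G" "finite (carrier G)" "H \<noteq> carrier G"
  shows "2 * card H = card (carrier G) \<or> 3 * card H \<le> card (carrier G)"
proof -
  obtain q where q: "card (carrier G) = card H * q"
    using sub_dvd[OF assms(1) subgroup_self subgroup.subset[OF assms(1)]] by (auto elim: dvdE)
  have "card (carrier G) > 0" using assms(2) card_gt_0_iff by blast
  hence "q \<noteq> 0" using q by auto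
  moreover have "q \<noteq> 1"
  proof
    assume "q = 1" hence "card H = card (carrier G)" using q by simp
    thus False using card_subset_eq[OF assms(2) subgroup.subset[OF assms(1)]] assms(3) by simp
  qed
  ultimately have "q = 2 \<or> q \<ge> 3" by linarith
  thus ?thesis
  proof
    assume "q = 2" thus ?thesis using q by simp
  next
    assume "q \<ge> 3" hence "card H * 3 \<le> card H * q" by simp
    thus ?thesis using q by linarith
  qed
qed

lemma comm_inv_left:
  assumes x: "x \<in> carrier G" and y: "y \<in> carrier G" and c: "x \<otimes> y = y \<otimes> x"
  shows "inv x \<otimes> y = y \<otimes> inv x"
proof -
  have 1: "x \<otimes> (inv x \<otimes> y) = y" using x y by (simp add: m_assoc[symmetric])
  have "x \<otimes> (y \<otimes> inv x) = (x \<otimes> y) \<otimes> inv x" using x y by (simp add: m_assoc)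
  also have "\<dots> = (y \<otimes> x) \<otimes> inv x" using c by simp
  also have "\<dots> = y" using x y by (simp add: m_assoc)
  finally have "x \<otimes> (inv x \<otimes> y) = x \<otimes> (y \<otimes> inv x)" using 1 by simp
  thus ?thesis using x y by simp
qed

lemma centralizer_sub:
  assumes "subgroup H G" "W \<subseteq> carrier G"
  shows "subgroup {x\<in>H. \<forall>y\<in>W. x \<otimes> y = y \<otimes> x} G"
proof (rule subgroupI)
  show "{x\<in>H. \<forall>y\<in>W. x \<otimes> y = y \<otimes> x} \<subseteq> carrier G" using assms subgroup.subset by blast
  have "\<one> \<in> H" using assms subgroup.one_closed by blast
  moreover have "\<forall>y\<in>W. \<one> \<otimes> y = y \<otimes> \<one>" using assms by auto
  ultimately show "{x\<in>H. \<forall>y\<in>W. x \<otimes> y = y \<otimes> x} \<noteq> {}" by blast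
next
  fix a assume a: "a \<in> {x\<in>H. \<forall>y\<in>W. x \<otimes> y = y \<otimes> x}"
  hence aG: "a \<in> carrier G" using assms subgroup.subset by blast
  have "\<forall>y\<in>W. inv a \<otimes> y = y \<otimes> inv a"
  proof
    fix y assume y: "y \<in> W"
    hence "a \<otimes> y = y \<otimes> a" using a by blast
    moreover have "y \<in> carrier G" using y assms(2) by blast
    ultimately show "inv a \<otimes> y = y \<otimes> inv a" using comm_inv_left[OF aG] by blast
  qed
  moreover have "inv a \<in> H" using a subgroup.m_inv_closed[OF assms(1)] by blast
  ultimately show "inv a \<in> {x\<in>H. \<forall>y\<in>W. x \<otimes> y = y \<otimes> x}" by blast
next
  fix a b assume a: "a \<in> {x\<in>H. \<forall>y\<in>W. x \<otimes> y = y \<otimes> x}" and b: "b \<in> {x\<in>H. \<forall>y\<in>W. x \<otimes> y = y \<otimes> x}"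
  hence aG: "a \<in> carrier G" and bG: "b \<in> carrier G" using assms subgroup.subset by blast+
  have "\<forall>y\<in>W. a \<otimes> b \<otimes> y = y \<otimes> (a \<otimes> b)"
  proof
    fix y assume y: "y \<in> W" hence yG: "y \<in> carrier G" using assms by blast
    have ay: "a \<otimes> y = y \<otimes> a" using a y by blast
    have bc: "b \<otimes> y = y \<otimes> b" using b y by blast
    have "a \<otimes> b \<otimes> y = a \<otimes> (b \<otimes> y)" using aG bG yG by (simp add: m_assoc)
    also have "\<dots> = a \<otimes> (y \<otimes> b)" using bc by simp
    also have "\<dots> = (a \<otimes> y) \<otimes> b" using aG bG yG by (simp add: m_assoc)
    also have "\<dots> = (y \<otimes> a) \<otimes> b" using ay by simp
    also have "\<dots> = y \<otimes> (a \<otimes> b)" using aG bG yG by (simp add: m_assoc)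
    finally show "a \<otimes> b \<otimes> y = y \<otimes> (a \<otimes> b)" .
  qed
  moreover have "a \<otimes> b \<in> H" using a b subgroup.m_closed[OF assms(1)] by blast
  ultimately show "a \<otimes> b \<in> {x\<in>H. \<forall>y\<in>W. x \<otimes> y = y \<otimes> x}" by blast
qed


lemma hb_closed: "b \<in> hom G G \<Longrightarrow> x \<in> carrier G \<Longrightarrow> b x \<in> carrier G"
  unfolding hom_def by auto

lemma hb_gh: "b \<in> hom G G \<Longrightarrow> group_hom G G b"
  unfolding group_hom_def group_hom_axioms_def using is_group by simp

lemma hb_one: "b \<in> hom G G \<Longrightarrow> b \<one> = \<one>"
  using group_hom.hom_one[OF hb_gh] by simp

lemma hb_inv: "b \<in> hom G G \<Longrightarrow> x \<in> carrier G \<Longrightarrow> b (inv x) = inv (b x)"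
  using group_hom.hom_inv[OF hb_gh] by simp

lemma inv_many:
  assumes H: "subgroup H G" and fH: "finite H" and b: "b \<in> hom G G"
    and big: "3 * card H < 4 * card {h\<in>H. b h = inv h}"
  shows "\<forall>h\<in>H. b h = inv h"
proof -
  define I where "I = {h\<in>H. b h = inv h}"
  have HG: "H \<subseteq> carrier G" using subgroup.subset[OF H] .
  have fI: "finite I" using fH unfolding I_def by simp
  have IH: "I \<subseteq> H" unfolding I_def by blast
  have big': "3 * card H < 4 * card I" using big unfolding I_def .
  have comm: "x \<otimes> y = y \<otimes> x" if x: "x \<in> I" and y: "y \<in> I" and xy: "x \<otimes> y \<in> I" for x y
  proof -
    have xG: "x \<in> carrier G" and yG: "y \<in> carrier G" using x y IH HG by blast+
    have "inv (x \<otimes> y) = b (x \<otimes> y)" using xy unfolding I_def by simp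
    also have "\<dots> = b x \<otimes> b y" using hom_mult[OF b xG yG] .
    also have "\<dots> = inv x \<otimes> inv y" using x y unfolding I_def by simp
    also have "\<dots> = inv (y \<otimes> x)" using xG yG by (simp add: inv_mult_group)
    finally have "inv (x \<otimes> y) = inv (y \<otimes> x)" .
    hence "inv (inv (x \<otimes> y)) = inv (inv (y \<otimes> x))" by simp
    thus ?thesis using xG yG by simp
  qed
  have cent: "{x\<in>H. \<forall>y\<in>{h}. x \<otimes> y = y \<otimes> x} = H" if h: "h \<in> I" for h
  proof -
    have hH: "h \<in> H" using h IH by blast
    hence hG: "h \<in> carrier G" using HG by blast
    define A where "A = {y\<in>H. h \<otimes> y \<in> I}"
    have Aim: "A = (\<lambda>z. inv h \<otimes> z) ` I"
    proof
      show "A \<subseteq> (\<lambda>z. inv h \<otimes> z) ` I"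
      proof
        fix y assume y: "y \<in> A"
        hence yG: "y \<in> carrier G" and hy: "h \<otimes> y \<in> I" using HG unfolding A_def by blast+
        have "y = inv h \<otimes> (h \<otimes> y)" using yG hG by (simp add: m_assoc[symmetric])
        thus "y \<in> (\<lambda>z. inv h \<otimes> z) ` I" using hy by blast
      qed
    next
      show "(\<lambda>z. inv h \<otimes> z) ` I \<subseteq> A"
      proof
        fix y assume "y \<in> (\<lambda>z. inv h \<otimes> z) ` I"
        then obtain z where z: "z \<in> I" and yz: "y = inv h \<otimes> z" by blast
        have zH: "z \<in> H" using z IH by blast
        hence zG: "z \<in> carrier G" using HG by blast
        have "inv h \<in> H" using subgroup.m_inv_closed[OF H hH] .
        hence yH: "y \<in> H" using yz zH subgroup.m_closed[OF H] by blast
        have "h \<otimes> y = z" using yz hG zG by (simp add: m_assoc[symmetric])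
        thus "y \<in> A" unfolding A_def using yH z by simp
      qed
    qed
    have injA: "inj_on (\<lambda>z. inv h \<otimes> z) I"
    proof (rule inj_onI)
      fix x y assume "x \<in> I" "y \<in> I" "inv h \<otimes> x = inv h \<otimes> y"
      moreover have "x \<in> carrier G" "y \<in> carrier G" using \<open>x \<in> I\<close> \<open>y \<in> I\<close> IH HG by blast+
      ultimately show "x = y" using hG by simp
    qed
    have cA: "card A = card I" using Aim card_image[OF injA] by simp
    have fA: "finite A" using fH unfolding A_def by simp
    have AH: "A \<subseteq> H" unfolding A_def by blast
    have "card (I \<union> A) + card (I \<inter> A) = card I + card A" using card_Un_Int[OF fI fA] by simp
    moreover have "card (I \<union> A) \<le> card H" using card_mono[OF fH] IH AH by simp
    ultimately have c1: "card I + card I \<le> card H + card (I \<inter> A)" using cA by linarith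
    have sub: "I \<inter> A \<subseteq> {x\<in>H. \<forall>y\<in>{h}. x \<otimes> y = y \<otimes> x}"
    proof
      fix y assume y: "y \<in> I \<inter> A"
      hence "y \<in> I" "h \<otimes> y \<in> I" "y \<in> H" using IH unfolding A_def by blast+
      hence "h \<otimes> y = y \<otimes> h" using comm[OF h] by blast
      thus "y \<in> {x\<in>H. \<forall>y\<in>{h}. x \<otimes> y = y \<otimes> x}" using \<open>y \<in> H\<close> by simp
    qed
    have csub: "subgroup {x\<in>H. \<forall>y\<in>{h}. x \<otimes> y = y \<otimes> x} G" proof -
      have "{h} \<subseteq> carrier G" using hG by simp
      thus ?thesis by (rule centralizer_sub[OF H])
    qed
    have "card (I \<inter> A) \<le> card {x\<in>H. \<forall>y\<in>{h}. x \<otimes> y = y \<otimes> x}"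
      using card_mono[OF _ sub] fH by simp
    hence "card H < 2 * card {x\<in>H. \<forall>y\<in>{h}. x \<otimes> y = y \<otimes> x}" using c1 big' by linarith
    thus ?thesis using sub_half[OF csub H _ fH] by blast
  qed
  define Z where "Z = {x\<in>H. \<forall>y\<in>H. x \<otimes> y = y \<otimes> x}"
  have Zsub: "subgroup Z G" unfolding Z_def using centralizer_sub[OF H HG] .
  have IZ: "I \<subseteq> Z"
  proof
    fix h assume h: "h \<in> I"
    have "\<forall>y\<in>H. h \<otimes> y = y \<otimes> h"
    proof
      fix y assume "y \<in> H"
      hence "y \<in> {x\<in>H. \<forall>y\<in>{h}. x \<otimes> y = y \<otimes> x}" using cent[OF h] by simp
      thus "h \<otimes> y = y \<otimes> h" by simp
    qed
    thus "h \<in> Z" unfolding Z_def using h IH by blast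
  qed
  have "card I \<le> card Z" using card_mono[OF _ IZ] fH unfolding Z_def by simp
  hence "card H < 2 * card Z" using big' by linarith
  hence ZH: "Z = H" using sub_half[OF Zsub H _ fH] unfolding Z_def by blast
  have ab: "x \<otimes> y = y \<otimes> x" if "x \<in> H" "y \<in> H" for x y
    using ZH that unfolding Z_def by blast
  have Isub: "subgroup I G"
  proof (rule subgroupI)
    show "I \<subseteq> carrier G" using IH HG by blast
    have "\<one> \<in> H" using subgroup.one_closed[OF H] .
    moreover have "b \<one> = inv \<one>" using hb_one[OF b] by simp
    ultimately have "\<one> \<in> I" unfolding I_def by simp
    thus "I \<noteq> {}" by blast
  next
    fix a assume a: "a \<in> I"
    hence aH: "a \<in> H" and aG: "a \<in> carrier G" and ba: "b a = inv a" using IH HG unfolding I_def by blast+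
    have "b (inv a) = inv (inv a)" using hb_inv[OF b aG] ba by simp
    moreover have "inv a \<in> H" using subgroup.m_inv_closed[OF H aH] .
    ultimately show "inv a \<in> I" unfolding I_def by simp
  next
    fix a c assume a: "a \<in> I" and c: "c \<in> I"
    hence aH: "a \<in> H" and aG: "a \<in> carrier G" and ba: "b a = inv a" using IH HG unfolding I_def by blast+
    from c have cH: "c \<in> H" and cG: "c \<in> carrier G" and bc: "b c = inv c" using IH HG unfolding I_def by blast+
    have "b (a \<otimes> c) = inv a \<otimes> inv c" using hom_mult[OF b aG cG] ba bc by simp
    also have "\<dots> = inv (c \<otimes> a)" using aG cG by (simp add: inv_mult_group)
    also have "\<dots> = inv (a \<otimes> c)" using ab[OF aH cH] by simp
    finally have "b (a \<otimes> c) = inv (a \<otimes> c)" .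
    moreover have "a \<otimes> c \<in> H" using subgroup.m_closed[OF H aH cH] .
    ultimately show "a \<otimes> c \<in> I" unfolding I_def by simp
  qed
  have "card H < 2 * card I" using big' by linarith
  hence "I = H" using sub_half[OF Isub H IH fH] by blast
  thus ?thesis unfolding I_def by blast
qed


lemma rc1 [simp]: "z \<in> carrier G \<Longrightarrow> s \<in> carrier G \<Longrightarrow> z \<otimes> s \<otimes> inv s = z"
  by (simp add: m_assoc)
lemma rc2 [simp]: "z \<in> carrier G \<Longrightarrow> s \<in> carrier G \<Longrightarrow> z \<otimes> inv s \<otimes> s = z"
  by (simp add: m_assoc)

lemma conj_hom: assumes s: "s \<in> carrier G" shows "(\<lambda>x. inv s \<otimes> x \<otimes> s) \<in> hom G G"
proof (rule homI)
  fix x assume "x \<in> carrier G" thus "inv s \<otimes> x \<otimes> s \<in> carrier G" using s by simp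
next
  fix x y assume x: "x \<in> carrier G" and y: "y \<in> carrier G"
  show "inv s \<otimes> (x \<otimes> y) \<otimes> s = inv s \<otimes> x \<otimes> s \<otimes> (inv s \<otimes> y \<otimes> s)"
    using s x y by (simp add: m_assoc[symmetric])
qed

lemma conj_eq_comm:
  assumes x: "x \<in> carrier G" and f: "f \<in> carrier G"
  shows "(inv x \<otimes> f \<otimes> x = f) = (f \<otimes> x = x \<otimes> f)"
proof -
  have "(inv x \<otimes> f \<otimes> x = f) = (x \<otimes> (inv x \<otimes> f \<otimes> x) = x \<otimes> f)" using x f by simp
  also have "x \<otimes> (inv x \<otimes> f \<otimes> x) = f \<otimes> x" using x f by (simp add: m_assoc[symmetric])
  finally show ?thesis .
qed

lemma inverting_abelian:
  assumes F: "subgroup F G" and t: "t \<in> carrier G" and inv: "\<forall>f\<in>F. inv t \<otimes> f \<otimes> t = inv f"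
    and x: "x \<in> F" and y: "y \<in> F"
  shows "x \<otimes> y = y \<otimes> x"
proof -
  have FG: "F \<subseteq> carrier G" using subgroup.subset[OF F] .
  have ix: "inv x \<in> F" and iy: "inv y \<in> F" using subgroup.m_inv_closed[OF F] x y by blast+
  have xG: "x \<in> carrier G" and yG: "y \<in> carrier G" using x y FG by blast+
  have "inv (inv x \<otimes> inv y) = inv t \<otimes> (inv x \<otimes> inv y) \<otimes> t"
    using inv subgroup.m_closed[OF F ix iy] by simp
  also have "\<dots> = (inv t \<otimes> inv x \<otimes> t) \<otimes> (inv t \<otimes> inv y \<otimes> t)"
    using hom_mult[OF conj_hom[OF t]] xG yG by simp
  also have "\<dots> = x \<otimes> y" using inv ix iy xG yG by simp
  finally have "inv (inv x \<otimes> inv y) = x \<otimes> y" .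
  moreover have "inv (inv x \<otimes> inv y) = y \<otimes> x" using xG yG by (simp add: inv_mult_group)
  ultimately show ?thesis by simp
qed

lemma fix_sub: assumes a: "a \<in> hom G G" shows "subgroup {x\<in>carrier G. a x = x} G"
proof (rule subgroupI)
  show "{x\<in>carrier G. a x = x} \<subseteq> carrier G" by blast
  have "a \<one> = \<one>" using hb_one[OF a] .
  thus "{x\<in>carrier G. a x = x} \<noteq> {}" by blast
next
  fix x assume "x \<in> {x\<in>carrier G. a x = x}"
  thus "inv x \<in> {x\<in>carrier G. a x = x}" using hb_inv[OF a] by simp
next
  fix x y assume "x \<in> {x\<in>carrier G. a x = x}" "y \<in> {x\<in>carrier G. a x = x}"
  thus "x \<otimes> y \<in> {x\<in>carrier G. a x = x}" using hom_mult[OF a] by simp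
qed

lemma multT:
  assumes a: "a \<in> hom G G" and t: "t \<in> carrier G" "a t = inv t" and f: "f \<in> carrier G" "a f = f"
  shows "(a (t \<otimes> f) = inv (t \<otimes> f)) = (inv t \<otimes> f \<otimes> t = inv f)"
proof -
  have "a (t \<otimes> f) = inv t \<otimes> f" using hom_mult[OF a t(1) f(1)] t f by simp
  moreover have "inv (t \<otimes> f) = inv f \<otimes> inv t" using t f by (simp add: inv_mult_group)
  moreover have "(inv t \<otimes> f = inv f \<otimes> inv t) = (inv t \<otimes> f \<otimes> t = inv f \<otimes> inv t \<otimes> t)"
    by (rule right_cancel[symmetric]) (use t f in simp)+
  moreover have "inv f \<otimes> inv t \<otimes> t = inv f" using t f by (simp add: m_assoc)
  ultimately show ?thesis by simp
qed

lemma dcount: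
  assumes fin: "finite (carrier G)" and FG: "F \<subseteq> carrier G" and MG: "M \<subseteq> carrier G"
    and XsG: "Xs \<subseteq> carrier G"
  shows "(\<Sum>t\<in>Xs. card {f\<in>F. t \<otimes> f \<in> M}) \<le> card F * card M"
proof -
  have fF: "finite F" using finite_subset[OF FG fin] .
  have fM: "finite M" using finite_subset[OF MG fin] .
  have cf: "card {f\<in>F. t \<otimes> f \<in> M} = (\<Sum>f\<in>F. if t \<otimes> f \<in> M then 1 else 0)" for t
    using sum.inter_filter[OF fF, of "\<lambda>_. (1::nat)" "\<lambda>f. t \<otimes> f \<in> M"] by simp
  have "(\<Sum>t\<in>Xs. card {f\<in>F. t \<otimes> f \<in> M}) \<le> (\<Sum>t\<in>carrier G. card {f\<in>F. t \<otimes> f \<in> M})"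
    by (rule sum_mono2[OF fin XsG]) simp
  also have "\<dots> = (\<Sum>t\<in>carrier G. \<Sum>f\<in>F. if t \<otimes> f \<in> M then 1 else 0)" using cf by simp
  also have "\<dots> = (\<Sum>f\<in>F. \<Sum>t\<in>carrier G. if t \<otimes> f \<in> M then 1 else 0)" by (rule sum.swap)
  also have "\<dots> = (\<Sum>f\<in>F. card {t\<in>carrier G. t \<otimes> f \<in> M})"
    using sum.inter_filter[OF fin, of "\<lambda>_. (1::nat)"] by simp
  also have "\<dots> \<le> (\<Sum>f\<in>F. card M)"
  proof (rule sum_mono)
    fix f assume "f \<in> F" hence fG: "f \<in> carrier G" using FG by blast
    have "inj_on (\<lambda>t. t \<otimes> f) {t\<in>carrier G. t \<otimes> f \<in> M}"
      by (rule inj_onI) (use fG in simp)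
    moreover have "(\<lambda>t. t \<otimes> f) ` {t\<in>carrier G. t \<otimes> f \<in> M} \<subseteq> M" by blast
    ultimately show "card {t\<in>carrier G. t \<otimes> f \<in> M} \<le> card M" using card_inj_on_le[OF _ _ fM] by blast
  qed
  also have "\<dots> = card F * card M" by simp
  finally show ?thesis .
qed


lemma key:
  assumes fin: "finite (carrier G)" and a: "a \<in> hom G G"
    and nid: "\<exists>x\<in>carrier G. a x \<noteq> x"
    and small: "16 * card {x\<in>carrier G. a x \<noteq> x \<and> a x \<noteq> inv x} < card (carrier G)"
  shows "abelian_exp_gt2 G \<or> gen_dicyclic G"
proof -
  define n where "n = card (carrier G)"
  define F where "F = {x\<in>carrier G. a x = x}"
  define T where "T = {x\<in>carrier G. a x = inv x}"
  define M where "M = {x\<in>carrier G. a x \<noteq> x \<and> a x \<noteq> inv x}"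
  define Good where "Good = {t\<in>carrier G - F. \<forall>f\<in>F. t \<otimes> f \<in> T}"
  define Bad where "Bad = carrier G - F - Good"
  have Fsub: "subgroup F G" unfolding F_def using fix_sub[OF a] .
  have FG: "F \<subseteq> carrier G" and TG: "T \<subseteq> carrier G" and MG: "M \<subseteq> carrier G"
    unfolding F_def T_def M_def by blast+
  have fF: "finite F" using finite_subset[OF FG fin] .
  have fT: "finite T" using finite_subset[OF TG fin] .
  have fM: "finite M" using finite_subset[OF MG fin] .
  have FneG: "F \<noteq> carrier G" using nid unfolding F_def by blast
  have oneF: "\<one> \<in> F" using subgroup.one_closed[OF Fsub] .
  have cF0: "card F > 0" using fF oneF card_gt_0_iff by blast
  have smallM: "16 * card M < n" unfolding M_def n_def using small .
  have FTM: "x \<in> F \<or> x \<in> T \<or> x \<in> M" if "x \<in> carrier G" for x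
    using that unfolding F_def T_def M_def by blast
  have TM: "T \<inter> M = {}" unfolding T_def M_def by blast
  have outF: "t \<otimes> f \<in> carrier G - F" if t: "t \<in> carrier G - F" and f: "f \<in> F" for t f
  proof -
    have tG: "t \<in> carrier G" and fG: "f \<in> carrier G" using t f FG by blast+
    have "t \<otimes> f \<notin> F"
    proof
      assume "t \<otimes> f \<in> F"
      moreover have "inv f \<in> F" using subgroup.m_inv_closed[OF Fsub f] .
      ultimately have "t \<otimes> f \<otimes> inv f \<in> F" using subgroup.m_closed[OF Fsub] by blast
      thus False using t tG fG by simp
    qed
    thus ?thesis using tG fG by simp
  qed
  have mT: "(t \<otimes> f \<in> T) = (inv t \<otimes> f \<otimes> t = inv f)" if t: "t \<in> T" and f: "f \<in> F" for t f
  proof -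
    have tG: "t \<in> carrier G" "a t = inv t" using t unfolding T_def by blast+
    have fG: "f \<in> carrier G" "a f = f" using f unfolding F_def by blast+
    have "(t \<otimes> f \<in> T) = (a (t \<otimes> f) = inv (t \<otimes> f))" unfolding T_def using tG fG by simp
    also have "\<dots> = (inv t \<otimes> f \<otimes> t = inv f)" using multT[OF a tG fG] .
    finally show ?thesis .
  qed
  have shift: "card {f\<in>F. t \<otimes> f \<in> T} = card {g\<in>F. inv s \<otimes> g \<otimes> s = inv g}"
    if t: "t \<in> carrier G" and f1: "f1 \<in> F" and s: "s = t \<otimes> f1" "s \<in> T" for t f1 s
  proof -
    have f1G: "f1 \<in> carrier G" using f1 FG by blast
    have eq: "{f\<in>F. t \<otimes> f \<in> T} = (\<lambda>g. f1 \<otimes> g) ` {g\<in>F. inv s \<otimes> g \<otimes> s = inv g}"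
    proof
      show "{f\<in>F. t \<otimes> f \<in> T} \<subseteq> (\<lambda>g. f1 \<otimes> g) ` {g\<in>F. inv s \<otimes> g \<otimes> s = inv g}"
      proof
        fix f assume f: "f \<in> {f\<in>F. t \<otimes> f \<in> T}"
        hence fF': "f \<in> F" and tf: "t \<otimes> f \<in> T" by blast+
        have fG: "f \<in> carrier G" using fF' FG by blast
        define g where "g = inv f1 \<otimes> f"
        have gF: "g \<in> F" unfolding g_def
          using subgroup.m_closed[OF Fsub subgroup.m_inv_closed[OF Fsub f1] fF'] .
        have "s \<otimes> g = t \<otimes> f" unfolding g_def s(1) using t f1G fG by (simp add: m_assoc[symmetric])
        hence "s \<otimes> g \<in> T" using tf by simp
        hence "inv s \<otimes> g \<otimes> s = inv g" using mT[OF s(2) gF] by simp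
        moreover have "f = f1 \<otimes> g" unfolding g_def using f1G fG by (simp add: m_assoc[symmetric])
        ultimately show "f \<in> (\<lambda>g. f1 \<otimes> g) ` {g\<in>F. inv s \<otimes> g \<otimes> s = inv g}" using gF by blast
      qed
    next
      show "(\<lambda>g. f1 \<otimes> g) ` {g\<in>F. inv s \<otimes> g \<otimes> s = inv g} \<subseteq> {f\<in>F. t \<otimes> f \<in> T}"
      proof
        fix f assume "f \<in> (\<lambda>g. f1 \<otimes> g) ` {g\<in>F. inv s \<otimes> g \<otimes> s = inv g}"
        then obtain g where gF: "g \<in> F" and gc: "inv s \<otimes> g \<otimes> s = inv g" and fg: "f = f1 \<otimes> g" by blast
        have gG: "g \<in> carrier G" using gF FG by blast
        have "s \<otimes> g \<in> T" using mT[OF s(2) gF] gc by simp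
        moreover have "s \<otimes> g = t \<otimes> f" unfolding fg s(1) using t f1G gG by (simp add: m_assoc)
        moreover have "f \<in> F" unfolding fg using subgroup.m_closed[OF Fsub f1 gF] .
        ultimately show "f \<in> {f\<in>F. t \<otimes> f \<in> T}" by simp
      qed
    qed
    have inj1: "inj_on (\<lambda>g. f1 \<otimes> g) {g\<in>F. inv s \<otimes> g \<otimes> s = inv g}"
    proof (rule inj_onI)
      fix x y assume "x \<in> {g\<in>F. inv s \<otimes> g \<otimes> s = inv g}" "y \<in> {g\<in>F. inv s \<otimes> g \<otimes> s = inv g}"
        and e: "f1 \<otimes> x = f1 \<otimes> y"
      hence "x \<in> carrier G" "y \<in> carrier G" using FG by blast+
      thus "x = y" using e f1G by simp
    qed
    show ?thesis using card_image[OF inj1] eq by simp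
  qed
  have Mset: "card {f\<in>F. t \<otimes> f \<in> M} = card F - card {f\<in>F. t \<otimes> f \<in> T}" if t: "t \<in> carrier G - F" for t
  proof -
    have "{f\<in>F. t \<otimes> f \<in> M} = F - {f\<in>F. t \<otimes> f \<in> T}"
    proof
      show "{f\<in>F. t \<otimes> f \<in> M} \<subseteq> F - {f\<in>F. t \<otimes> f \<in> T}" using TM by blast
      show "F - {f\<in>F. t \<otimes> f \<in> T} \<subseteq> {f\<in>F. t \<otimes> f \<in> M}"
      proof
        fix f assume f: "f \<in> F - {f\<in>F. t \<otimes> f \<in> T}"
        hence "t \<otimes> f \<in> carrier G - F" using outF[OF t] by blast
        thus "f \<in> {f\<in>F. t \<otimes> f \<in> M}" using FTM f by blast
      qed
    qed
    thus ?thesis using card_Diff_subset[of "{f\<in>F. t \<otimes> f \<in> T}" F] fF by (simp add: finite_subset)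
  qed
  have GoodT: "t \<in> T \<and> (\<forall>f\<in>F. inv t \<otimes> f \<otimes> t = inv f)" if t: "t \<in> Good" for t
  proof -
    have tG: "t \<in> carrier G" using t unfolding Good_def by blast
    have "t \<otimes> \<one> \<in> T" using t oneF unfolding Good_def by blast
    hence tT: "t \<in> T" using tG by simp
    moreover have "\<forall>f\<in>F. inv t \<otimes> f \<otimes> t = inv f" using t mT[OF tT] unfolding Good_def by blast
    ultimately show ?thesis by blast
  qed
  have badb: "card F \<le> 4 * card {f\<in>F. t \<otimes> f \<in> M}" if t: "t \<in> Bad" for t
  proof -
    have tGF: "t \<in> carrier G - F" and tnG: "t \<notin> Good" using t unfolding Bad_def by blast+
    have tG: "t \<in> carrier G" using tGF by blast
    show ?thesis
    proof (cases "{f\<in>F. t \<otimes> f \<in> T} = {}")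
      case True
      hence "card {f\<in>F. t \<otimes> f \<in> M} = card F" using Mset[OF tGF] by (simp only: card.empty)
      thus ?thesis by simp
    next
      case False
      then obtain f1 where f1: "f1 \<in> F" "t \<otimes> f1 \<in> T" by blast
      define s where "s = t \<otimes> f1"
      have sT: "s \<in> T" using f1 unfolding s_def by simp
      have sG: "s \<in> carrier G" using sT TG by blast
      have cP: "card {f\<in>F. t \<otimes> f \<in> T} = card {g\<in>F. inv s \<otimes> g \<otimes> s = inv g}"
        using shift[OF tG f1(1) s_def sT] .
      have "4 * card {g\<in>F. inv s \<otimes> g \<otimes> s = inv g} \<le> 3 * card F"
      proof (rule ccontr)
        assume "\<not> ?thesis"
        hence "3 * card F < 4 * card {g\<in>F. inv s \<otimes> g \<otimes> s = inv g}" by linarith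
        hence all: "\<forall>g\<in>F. inv s \<otimes> g \<otimes> s = inv g" using inv_many[OF Fsub fF conj_hom[OF sG]] by blast
        have "t \<in> Good"
        proof -
          have "\<forall>f\<in>F. t \<otimes> f \<in> T"
          proof
            fix f assume fF': "f \<in> F"
            define g where "g = inv f1 \<otimes> f"
            have gF: "g \<in> F" unfolding g_def
              using subgroup.m_closed[OF Fsub subgroup.m_inv_closed[OF Fsub f1(1)] fF'] .
            have "s \<otimes> g \<in> T" using mT[OF sT gF] all gF by blast
            moreover have "s \<otimes> g = t \<otimes> f" unfolding g_def s_def
              using tG f1(1) fF' FG by (simp add: m_assoc[symmetric] subsetD)
            ultimately show "t \<otimes> f \<in> T" by simp
          qed
          thus ?thesis unfolding Good_def using tGF by blast
        qed
        thus False using tnG by blast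
      qed
      hence "4 * card {f\<in>F. t \<otimes> f \<in> T} \<le> 3 * card F" using cP by simp
      thus ?thesis using Mset[OF tGF] by linarith
    qed
  qed
  have Bad_le: "card Bad \<le> 4 * card M"
  proof -
    have BG: "Bad \<subseteq> carrier G" unfolding Bad_def by blast
    have "card Bad * card F = (\<Sum>t\<in>Bad. card F)" by simp
    also have "\<dots> \<le> (\<Sum>t\<in>Bad. 4 * card {f\<in>F. t \<otimes> f \<in> M})" by (rule sum_mono) (rule badb)
    also have "\<dots> = 4 * (\<Sum>t\<in>Bad. card {f\<in>F. t \<otimes> f \<in> M})" by (simp add: sum_distrib_left)
    also have "\<dots> \<le> 4 * (card F * card M)" using dcount[OF fin FG MG BG] by simp
    finally have "card Bad * card F \<le> card M * 4 * card F" by (simp add: ac_simps)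
    thus ?thesis using cF0 by (simp add: ac_simps)
  qed
  have part: "n = card F + card Good + card Bad"
  proof -
    have "carrier G = F \<union> (Good \<union> Bad)" unfolding Bad_def Good_def using FG by blast
    moreover have "F \<inter> (Good \<union> Bad) = {}" "Good \<inter> Bad = {}" unfolding Bad_def Good_def by blast+
    moreover have "finite Good" "finite Bad" using fin unfolding Good_def Bad_def by simp_all
    ultimately show ?thesis unfolding n_def using fF by (simp add: card_Un_disjoint)
  qed
  have GoodF: "Good \<subseteq> carrier G - F" unfolding Good_def by blast
  have fGood: "finite Good" using fin unfolding Good_def by simp
  from sub_index[OF Fsub fin FneG] have "2 * card F = n \<or> 3 * card F \<le> n" unfolding n_def .
  thus ?thesis
  proof
    assume idx2: "2 * card F = n"
    have Bad0: "Bad = {}"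
    proof (rule ccontr)
      assume "Bad \<noteq> {}"
      then obtain t where t: "t \<in> Bad" by blast
      have tGF: "t \<in> carrier G - F" and tnG: "t \<notin> Good" using t unfolding Bad_def by blast+
      have tG: "t \<in> carrier G" using tGF by blast
      have sub: "(\<lambda>f. t \<otimes> f) ` F \<subseteq> Bad"
      proof
        fix x assume "x \<in> (\<lambda>f. t \<otimes> f) ` F"
        then obtain f where f: "f \<in> F" and x: "x = t \<otimes> f" by blast
        have fG: "f \<in> carrier G" using f FG by blast
        have xGF: "x \<in> carrier G - F" using outF[OF tGF f] x by simp
        have "x \<notin> Good"
        proof
          assume xG: "x \<in> Good"
          have "\<forall>g\<in>F. t \<otimes> g \<in> T"
          proof
            fix g assume gF: "g \<in> F"
            have hF: "inv f \<otimes> g \<in> F"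
              using subgroup.m_closed[OF Fsub subgroup.m_inv_closed[OF Fsub f] gF] .
            hence "x \<otimes> (inv f \<otimes> g) \<in> T" using xG unfolding Good_def by blast
            moreover have "x \<otimes> (inv f \<otimes> g) = t \<otimes> g" unfolding x
              using tG fG gF FG by (simp add: m_assoc[symmetric] subsetD)
            ultimately show "t \<otimes> g \<in> T" by simp
          qed
          thus False using tnG tGF unfolding Good_def by blast
        qed
        thus "x \<in> Bad" using xGF unfolding Bad_def by blast
      qed
      have "inj_on (\<lambda>f. t \<otimes> f) F"
      proof (rule inj_onI)
        fix x y assume "x \<in> F" "y \<in> F" and e: "t \<otimes> x = t \<otimes> y"
        hence "x \<in> carrier G" "y \<in> carrier G" using FG by blast+
        thus "x = y" using e tG by simp
      qed
      hence "card F = card ((\<lambda>f. t \<otimes> f) ` F)" using card_image by metis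
      also have "\<dots> \<le> card Bad" using card_mono[OF _ sub] fin unfolding Bad_def by simp
      finally have "card F \<le> card Bad" .
      thus False using Bad_le idx2 smallM by linarith
    qed
    have allGood: "carrier G - F \<subseteq> Good" using Bad0 unfolding Bad_def by blast
    obtain t where tGF: "t \<in> carrier G - F" using FneG FG by blast
    have tG: "t \<in> carrier G" and tnF: "t \<notin> F" using tGF by blast+
    have tGood: "t \<in> Good" using allGood tGF by blast
    have tT: "t \<in> T" and tinv: "\<forall>f\<in>F. inv t \<otimes> f \<otimes> t = inv f" using GoodT[OF tGood] by blast+
    have abF: "x \<otimes> y = y \<otimes> x" if "x \<in> F" "y \<in> F" for x y
      using inverting_abelian[OF Fsub tG tinv that] .
    have injt: "inj_on (\<lambda>f. t \<otimes> f) F"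
    proof (rule inj_onI)
      fix x y assume "x \<in> F" "y \<in> F" and e: "t \<otimes> x = t \<otimes> y"
      hence "x \<in> carrier G" "y \<in> carrier G" using FG by blast+
      thus "x = y" using e tG by simp
    qed
    have imsub: "(\<lambda>f. t \<otimes> f) ` F \<subseteq> carrier G - F" using outF[OF tGF] by blast
    have "card ((\<lambda>f. t \<otimes> f) ` F) = card (carrier G - F)"
    proof -
      have "card ((\<lambda>f. t \<otimes> f) ` F) = card F" using card_image[OF injt] .
      moreover have "card (carrier G - F) = n - card F"
        using card_Diff_subset[OF fF FG] unfolding n_def .
      ultimately show ?thesis using idx2 by simp
    qed
    hence imeq: "(\<lambda>f. t \<otimes> f) ` F = carrier G - F"
      using card_subset_eq[OF _ imsub] fin by blast
    have lcos: "t <# F = (\<lambda>f. t \<otimes> f) ` F" unfolding l_coset_def by blast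
    have carr: "carrier G = F \<union> (t <# F)" unfolding lcos imeq using FG by blast
    define y where "y = t \<otimes> t"
    have yG: "y \<in> carrier G" unfolding y_def using tG by simp
    have yF: "y \<in> F"
    proof (rule ccontr)
      assume "y \<notin> F"
      hence "y \<in> (\<lambda>f. t \<otimes> f) ` F" using imeq yG by blast
      then obtain f where f: "f \<in> F" and e: "t \<otimes> t = t \<otimes> f" unfolding y_def by blast
      have "f \<in> carrier G" using f FG by blast
      hence "t = f" using e tG by simp
      thus False using f tnF by simp
    qed
    have "a y = inv t \<otimes> inv t" unfolding y_def using hom_mult[OF a tG tG] tT unfolding T_def by simp
    also have "\<dots> = inv y" unfolding y_def using tG by (simp add: inv_mult_group)
    finally have "a y = inv y" .
    moreover have "a y = y" using yF unfolding F_def by simp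
    ultimately have yinv: "inv y = y" by simp
    have yy: "y \<otimes> y = \<one>" using yG yinv r_inv[OF yG] by simp
    have y1: "y \<noteq> \<one>"
    proof
      assume "y = \<one>"
      hence "inv t = t" using inv_equality[of t t] tG unfolding y_def by simp
      moreover have "a t = inv t" using tT unfolding T_def by simp
      ultimately have "t \<in> F" using tG unfolding F_def by simp
      thus False using tnF by simp
    qed
    have sub2: "subgroup {\<one>, y} G"
    proof (rule subgroupI)
      show "{\<one>, y} \<subseteq> carrier G" using yG by simp
      show "{\<one>, y} \<noteq> {}" by simp
    next
      fix x assume "x \<in> {\<one>, y}" thus "inv x \<in> {\<one>, y}" using yinv by auto
    next
      fix x z assume "x \<in> {\<one>, y}" "z \<in> {\<one>, y}" thus "x \<otimes> z \<in> {\<one>, y}" using yy yG by auto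
    qed
    have "card {\<one>, y} dvd card F" using sub_dvd[OF sub2 Fsub] yF oneF by simp
    moreover have "card {\<one>, y} = 2" using y1 by simp
    ultimately have evF: "even (card F)" by simp
    show ?thesis
    proof (cases "\<exists>f\<in>F. f \<otimes> f \<noteq> \<one>")
      case True
      have "gen_dicyclic G"
        unfolding gen_dicyclic_def
        apply (rule exI[of _ F], rule exI[of _ t], rule exI[of _ y])
        using Fsub abF fF evF True tG tnF carr yF y1 yy tinv by (simp add: y_def)
      thus ?thesis by simp
    next
      case False
      hence ff: "f \<otimes> f = \<one>" if "f \<in> F" for f using that by blast
      have finv: "inv f = f" if "f \<in> F" for f
        using inv_equality[of f f] ff[OF that] that FG by blast
      have tcomm: "t \<otimes> f = f \<otimes> t" if f: "f \<in> F" for f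
      proof -
        have fG: "f \<in> carrier G" using f FG by blast
        have "inv t \<otimes> f \<otimes> t = f" using tinv f finv[OF f] by simp
        thus ?thesis using conj_eq_comm[OF tG fG] by simp
      qed
      have formx: "x \<in> F \<or> (\<exists>g\<in>F. x = t \<otimes> g)" if "x \<in> carrier G" for x
        using that carr lcos by blast
      have cF: "f \<otimes> z = z \<otimes> f" if f: "f \<in> F" and z: "z \<in> carrier G" for f z
      proof -
        have fG: "f \<in> carrier G" using f FG by blast
        from formx[OF z] show ?thesis
        proof
          assume "z \<in> F" thus ?thesis using abF f by blast
        next
          assume "\<exists>g\<in>F. z = t \<otimes> g"
          then obtain g where g: "g \<in> F" and zg: "z = t \<otimes> g" by blast
          have gG: "g \<in> carrier G" using g FG by blast
          have "f \<otimes> (t \<otimes> g) = (f \<otimes> t) \<otimes> g" using fG gG tG by (simp add: m_assoc)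
          also have "\<dots> = (t \<otimes> f) \<otimes> g" using tcomm[OF f] by simp
          also have "\<dots> = t \<otimes> (f \<otimes> g)" using fG gG tG by (simp add: m_assoc)
          also have "\<dots> = t \<otimes> (g \<otimes> f)" using abF[OF f g] by simp
          also have "\<dots> = (t \<otimes> g) \<otimes> f" using fG gG tG by (simp add: m_assoc)
          finally show ?thesis unfolding zg .
        qed
      qed
      have ct: "t \<otimes> z = z \<otimes> t" if z: "z \<in> carrier G" for z
      proof -
        from formx[OF z] show ?thesis
        proof
          assume "z \<in> F" thus ?thesis using tcomm by blast
        next
          assume "\<exists>g\<in>F. z = t \<otimes> g"
          then obtain g where g: "g \<in> F" and zg: "z = t \<otimes> g" by blast
          have gG: "g \<in> carrier G" using g FG by blast
          have "(t \<otimes> g) \<otimes> t = t \<otimes> (g \<otimes> t)" using gG tG by (simp add: m_assoc)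
          also have "\<dots> = t \<otimes> (t \<otimes> g)" using tcomm[OF g] by simp
          finally show ?thesis unfolding zg by simp
        qed
      qed
      have comm: "x \<otimes> z = z \<otimes> x" if x: "x \<in> carrier G" and z: "z \<in> carrier G" for x z
      proof -
        from formx[OF x] show ?thesis
        proof
          assume "x \<in> F" thus ?thesis using cF z by blast
        next
          assume "\<exists>g\<in>F. x = t \<otimes> g"
          then obtain g where g: "g \<in> F" and xg: "x = t \<otimes> g" by blast
          have gG: "g \<in> carrier G" using g FG by blast
          have "(t \<otimes> g) \<otimes> z = t \<otimes> (g \<otimes> z)" using gG tG z by (simp add: m_assoc)
          also have "\<dots> = t \<otimes> (z \<otimes> g)" using cF[OF g z] by simp
          also have "\<dots> = (t \<otimes> z) \<otimes> g" using gG tG z by (simp add: m_assoc)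
          also have "\<dots> = (z \<otimes> t) \<otimes> g" using ct[OF z] by simp
          also have "\<dots> = z \<otimes> (t \<otimes> g)" using gG tG z by (simp add: m_assoc)
          finally show ?thesis unfolding xg .
        qed
      qed
      have "comm_group G" by (rule group_comm_groupI) (rule comm)
      moreover have "t \<otimes> t \<noteq> \<one>" using y1 unfolding y_def .
      ultimately have "abelian_exp_gt2 G" unfolding abelian_exp_gt2_def using tG by blast
      thus ?thesis by simp
    qed
  next
    assume idx3: "3 * card F \<le> n"
    have GoodB: "n \<le> card F + card Good + 4 * card M" using part Bad_le by linarith
    show ?thesis
    proof (cases "\<forall>f\<in>F. f \<otimes> f = \<one>")
      case True
      have FT: "F \<subseteq> T"
      proof
        fix f assume f: "f \<in> F"
        hence fG: "f \<in> carrier G" and af: "a f = f" unfolding F_def by blast+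
        have "inv f = f" using inv_equality[of f f] True f fG by blast
        thus "f \<in> T" using fG af unfolding T_def by simp
      qed
      have GT: "Good \<subseteq> T" using GoodT by blast
      have "card (F \<union> Good) = card F + card Good"
        using card_Un_disjoint[OF fF fGood] GoodF by blast
      moreover have "card (F \<union> Good) \<le> card T" using card_mono[OF fT] FT GT by simp
      ultimately have "3 * card (carrier G) < 4 * card {h\<in>carrier G. a h = inv h}"
        using GoodB smallM unfolding T_def n_def by linarith
      hence allinv: "\<forall>x\<in>carrier G. a x = inv x" using inv_many[OF subgroup_self fin a] by blast
      have c1: "inv x \<otimes> inv z = inv z \<otimes> inv x" if x: "x \<in> carrier G" and z: "z \<in> carrier G" for x z
      proof -
        have "inv x \<otimes> inv z = a (x \<otimes> z)" using hom_mult[OF a x z] allinv x z by simp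
        also have "\<dots> = inv (x \<otimes> z)" using allinv x z by simp
        also have "\<dots> = inv z \<otimes> inv x" using x z by (simp add: inv_mult_group)
        finally show ?thesis .
      qed
      have comm: "x \<otimes> z = z \<otimes> x" if x: "x \<in> carrier G" and z: "z \<in> carrier G" for x z
        using c1[of "inv x" "inv z"] x z by simp
      have "comm_group G" by (rule group_comm_groupI) (rule comm)
      moreover obtain x where x: "x \<in> carrier G" "a x \<noteq> x" using nid by blast
      moreover have "x \<otimes> x \<noteq> \<one>"
      proof
        assume "x \<otimes> x = \<one>"
        hence "inv x = x" using inv_equality[of x x] x by blast
        thus False using x allinv by simp
      qed
      ultimately have "abelian_exp_gt2 G" unfolding abelian_exp_gt2_def by blast
      thus ?thesis by simp
    next
      case False
      then obtain f0 where f0: "f0 \<in> F" "f0 \<otimes> f0 \<noteq> \<one>" by blast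
      have f0G: "f0 \<in> carrier G" using f0 FG by blast
      have "12 * card Good > 5 * n" using GoodB idx3 smallM by linarith
      hence "Good \<noteq> {}" by auto
      then obtain t0 where t0: "t0 \<in> Good" by blast
      have t0G: "t0 \<in> carrier G" and t0nF: "t0 \<notin> F" using t0 GoodF by blast+
      have t0inv: "\<forall>f\<in>F. inv t0 \<otimes> f \<otimes> t0 = inv f" using GoodT[OF t0] by blast
      have abF: "x \<otimes> y = y \<otimes> x" if "x \<in> F" "y \<in> F" for x y
        using inverting_abelian[OF Fsub t0G t0inv that] .
      define K where "K = {x\<in>carrier G. \<forall>f\<in>F. x \<otimes> f = f \<otimes> x}"
      define L where "L = {x\<in>carrier G. \<forall>f\<in>F. inv x \<otimes> f \<otimes> x = inv f}"
      have Ksub: "subgroup K G" unfolding K_def using centralizer_sub[OF subgroup_self FG] .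
      have KG: "K \<subseteq> carrier G" and LG: "L \<subseteq> carrier G" unfolding K_def L_def by blast+
      have fK: "finite K" and fL: "finite L" using finite_subset[OF KG fin] finite_subset[OF LG fin] .
      have GoodL: "Good \<subseteq> L" unfolding L_def using GoodT GoodF by blast
      have KL: "K \<inter> L = {}"
      proof (rule ccontr)
        assume "K \<inter> L \<noteq> {}"
        then obtain x where xK: "x \<in> K" and xL: "x \<in> L" by blast
        have xG: "x \<in> carrier G" using xK KG by blast
        have "x \<otimes> f0 = f0 \<otimes> x" using xK f0 unfolding K_def by blast
        hence "inv x \<otimes> f0 \<otimes> x = f0" using conj_eq_comm[OF xG f0G] by simp
        moreover have "inv x \<otimes> f0 \<otimes> x = inv f0" using xL f0 unfolding L_def by blast
        ultimately have "inv f0 = f0" by simp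
        hence "f0 \<otimes> f0 = \<one>" using r_inv[OF f0G] by simp
        thus False using f0 by simp
      qed
      have FK: "F \<subseteq> K" unfolding K_def using abF FG by blast
      have LK: "card L \<le> card K"
      proof -
        have inj: "inj_on (\<lambda>x. inv t0 \<otimes> x) L"
        proof (rule inj_onI)
          fix x z assume "x \<in> L" "z \<in> L" and e: "inv t0 \<otimes> x = inv t0 \<otimes> z"
          hence "x \<in> carrier G" "z \<in> carrier G" using LG by blast+
          thus "x = z" using e t0G by simp
        qed
        have im: "(\<lambda>x. inv t0 \<otimes> x) ` L \<subseteq> K"
        proof
          fix w assume "w \<in> (\<lambda>x. inv t0 \<otimes> x) ` L"
          then obtain x where xL: "x \<in> L" and w: "w = inv t0 \<otimes> x" by blast
          have xG: "x \<in> carrier G" using xL LG by blast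
          have wG: "w \<in> carrier G" using w xG t0G by simp
          have "\<forall>f\<in>F. w \<otimes> f = f \<otimes> w"
          proof
            fix f assume f: "f \<in> F"
            have fG: "f \<in> carrier G" using f FG by blast
            have ifF: "inv f \<in> F" using subgroup.m_inv_closed[OF Fsub f] .
            have e1: "inv t0 \<otimes> inv f \<otimes> t0 = f" using t0inv ifF fG by simp
            have e2: "t0 \<otimes> f \<otimes> inv t0 = inv f"
            proof -
              have "t0 \<otimes> f \<otimes> inv t0 = t0 \<otimes> (inv t0 \<otimes> inv f \<otimes> t0) \<otimes> inv t0" using e1 by simp
              also have "\<dots> = inv f" using t0G fG by (simp add: m_assoc[symmetric])
              finally show ?thesis .
            qed
            have e3: "inv x \<otimes> inv f \<otimes> x = f" using xL ifF fG unfolding L_def by simp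
            have "inv w \<otimes> f \<otimes> w = inv x \<otimes> (t0 \<otimes> f \<otimes> inv t0) \<otimes> x"
              unfolding w using xG t0G fG by (simp add: inv_mult_group m_assoc)
            also have "\<dots> = f" using e2 e3 by simp
            finally have "inv w \<otimes> f \<otimes> w = f" .
            thus "w \<otimes> f = f \<otimes> w" using conj_eq_comm[OF wG fG] by simp
          qed
          thus "w \<in> K" unfolding K_def using wG by blast
        qed
        show ?thesis using card_inj_on_le[OF inj im fK] .
      qed
      have "card Good \<le> card L" using card_mono[OF fL GoodL] .
      hence cK: "12 * card K > 5 * n" using LK \<open>12 * card Good > 5 * n\<close> by linarith
      have KneG: "K \<noteq> carrier G"
      proof
        assume "K = carrier G"
        hence "t0 \<in> K" using t0G by simp
        moreover have "t0 \<in> L" using GoodL t0 by blast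
        ultimately show False using KL by blast
      qed
      have idxK: "2 * card K = n"
        using sub_index[OF Ksub fin KneG] cK unfolding n_def by linarith
      have KFb: "card F \<le> 2 * card {f\<in>F. x \<otimes> f \<in> M}" if x: "x \<in> K - F" for x
      proof -
        have xG: "x \<in> carrier G" using x KG by blast
        have xGF: "x \<in> carrier G - F" using x xG by blast
        show ?thesis
        proof (cases "{f\<in>F. x \<otimes> f \<in> T} = {}")
          case True
          hence "card {f\<in>F. x \<otimes> f \<in> M} = card F" using Mset[OF xGF] by (simp only: card.empty)
          thus ?thesis by simp
        next
          case False
          then obtain f1 where f1: "f1 \<in> F" "x \<otimes> f1 \<in> T" by blast
          define s where "s = x \<otimes> f1"
          have sT: "s \<in> T" using f1 unfolding s_def by simp
          have sG: "s \<in> carrier G" using sT TG by blast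
          have sK: "s \<in> K" unfolding s_def using subgroup.m_closed[OF Ksub] x f1 FK by blast
          have cP: "card {f\<in>F. x \<otimes> f \<in> T} = card {g\<in>F. inv s \<otimes> g \<otimes> s = inv g}"
            using shift[OF xG f1(1) s_def sT] .
          define Om where "Om = {g\<in>F. inv g = g}"
          have OmEq: "{g\<in>F. inv s \<otimes> g \<otimes> s = inv g} = Om"
          proof -
            have "inv s \<otimes> g \<otimes> s = g" if g: "g \<in> F" for g
            proof -
              have gG: "g \<in> carrier G" using g FG by blast
              have "s \<otimes> g = g \<otimes> s" using sK g unfolding K_def by blast
              thus ?thesis using conj_eq_comm[OF sG gG] by simp
            qed
            thus ?thesis unfolding Om_def by auto
          qed
          have Omsub: "subgroup Om G"
          proof (rule subgroupI)
            show "Om \<subseteq> carrier G" unfolding Om_def using FG by blast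
            have "inv \<one> = \<one>" by simp
            thus "Om \<noteq> {}" unfolding Om_def using oneF by blast
          next
            fix g assume "g \<in> Om"
            thus "inv g \<in> Om" unfolding Om_def using subgroup.m_inv_closed[OF Fsub] by simp
          next
            fix g h assume g: "g \<in> Om" and h: "h \<in> Om"
            have gF: "g \<in> F" and hF: "h \<in> F" and ig: "inv g = g" and ih: "inv h = h"
              using g h unfolding Om_def by blast+
            have gG: "g \<in> carrier G" and hG: "h \<in> carrier G" using gF hF FG by blast+
            have "inv (g \<otimes> h) = inv h \<otimes> inv g" using gG hG by (simp add: inv_mult_group)
            also have "\<dots> = h \<otimes> g" using ig ih by simp
            also have "\<dots> = g \<otimes> h" using abF[OF hF gF] .
            finally show "g \<otimes> h \<in> Om" unfolding Om_def using subgroup.m_closed[OF Fsub gF hF] by simp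
          qed
          have OmF: "Om \<subseteq> F" unfolding Om_def by blast
          have "Om \<noteq> F"
          proof
            assume "Om = F"
            hence "inv f0 = f0" using f0 unfolding Om_def by blast
            hence "f0 \<otimes> f0 = \<one>" using r_inv[OF f0G] by simp
            thus False using f0 by simp
          qed
          hence "\<not> card F < 2 * card Om" using sub_half[OF Omsub Fsub OmF fF] by blast
          hence "2 * card {f\<in>F. x \<otimes> f \<in> T} \<le> card F" using cP OmEq by simp
          thus ?thesis using Mset[OF xGF] by linarith
        qed
      qed
      have KFG: "K - F \<subseteq> carrier G" using KG by blast
      have "card (K - F) * card F = (\<Sum>x\<in>K - F. card F)" by simp
      also have "\<dots> \<le> (\<Sum>x\<in>K - F. 2 * card {f\<in>F. x \<otimes> f \<in> M})" by (rule sum_mono) (rule KFb)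
      also have "\<dots> = 2 * (\<Sum>x\<in>K - F. card {f\<in>F. x \<otimes> f \<in> M})" by (simp add: sum_distrib_left)
      also have "\<dots> \<le> 2 * (card F * card M)" using dcount[OF fin FG MG KFG] by simp
      finally have "card (K - F) * card F \<le> card M * 2 * card F" by (simp add: ac_simps)
      hence "card (K - F) \<le> 2 * card M" using cF0 by (simp add: ac_simps)
      moreover have "card (K - F) = card K - card F" using card_Diff_subset[OF fF FK] .
      ultimately show ?thesis using idxK idx3 smallM by linarith
    qed
  qed
qed

end


lemma quot_sum:
  assumes eq: "equiv A r" and fA: "finite A"
  shows "real (card (A//r)) = (\<Sum>x\<in>A. 1 / real (card (r``{x})))"
proof -
  have rA: "r \<subseteq> A \<times> A" using eq unfolding equiv_def refl_on_def by blast
  have fQ: "finite (A//r)" using finite_quotient[OF fA rA] .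
  have fC: "\<forall>C\<in>A//r. finite C" using fA Union_quotient[OF eq] by (metis Union_upper finite_subset)
  have dj: "\<forall>C\<in>A//r. \<forall>D\<in>A//r. C \<noteq> D \<longrightarrow> C \<inter> D = {}" using quotient_disj[OF eq] by blast
  have "(\<Sum>x\<in>A. 1 / real (card (r``{x}))) = (\<Sum>x\<in>\<Union>(A//r). 1 / real (card (r``{x})))"
    using Union_quotient[OF eq] by simp
  also have "\<dots> = (\<Sum>C\<in>A//r. \<Sum>x\<in>C. 1 / real (card (r``{x})))"
    using sum.Union_disjoint[OF fC dj] by simp
  also have "\<dots> = (\<Sum>C\<in>A//r. \<Sum>x\<in>C. 1 / real (card C))"
  proof (rule sum.cong[OF refl])
    fix C assume C: "C \<in> A//r"
    show "(\<Sum>x\<in>C. 1 / real (card (r``{x}))) = (\<Sum>x\<in>C. 1 / real (card C))"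
    proof (rule sum.cong[OF refl])
      fix x assume x: "x \<in> C"
      from C obtain a where a: "C = r``{a}" "a \<in> A" by (rule quotientE)
      have "(a, x) \<in> r" using x a by blast
      hence "r``{a} = r``{x}" using equiv_class_eq[OF eq] by blast
      thus "1 / real (card (r``{x})) = 1 / real (card C)" using a by simp
    qed
  qed
  also have "\<dots> = (\<Sum>C\<in>A//r. 1)"
  proof (rule sum.cong[OF refl])
    fix C assume C: "C \<in> A//r"
    have "C \<noteq> {}" using in_quotient_imp_non_empty[OF eq C] .
    hence "card C > 0" using fC C card_gt_0_iff by blast
    thus "(\<Sum>x\<in>C. 1 / real (card C)) = 1" by simp
  qed
  also have "\<dots> = real (card (A//r))" by simp
  finally show ?thesis by simp
qed

context group begin

lemma fix_count:
  assumes fin: "finite (carrier G)" and p: "p \<in> hom G G" and pinj: "inj_on p (carrier G)"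
  shows "real (card {S. S \<subseteq> carrier G \<and> S = subset_inv G S \<and> (\<forall>x\<in>carrier G. x \<in> S \<longleftrightarrow> p x \<in> S)})
    \<le> 2 powr (c_num G - real (card {x\<in>carrier G. p x \<noteq> x \<and> p x \<noteq> inv x}) / 4)"
proof -
  define Fx where "Fx = {S. S \<subseteq> carrier G \<and> S = subset_inv G S \<and> (\<forall>x\<in>carrier G. x \<in> S \<longleftrightarrow> p x \<in> S)}"
  define M where "M = {x\<in>carrier G. p x \<noteq> x \<and> p x \<noteq> inv x}"
  define E where "E = {(x,y). x \<in> carrier G \<and> y \<in> carrier G \<and> (\<forall>S\<in>Fx. x \<in> S \<longleftrightarrow> y \<in> S)}"
  define P where "P = carrier G // E"
  have pG: "x \<in> carrier G \<Longrightarrow> p x \<in> carrier G" for x using hb_closed[OF p] .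
  have eq: "equiv (carrier G) E"
    unfolding equiv_def refl_on_def sym_def trans_def E_def by blast
  have fP: "finite P" unfolding P_def using finite_quotient[OF fin] eq unfolding equiv_def refl_on_def by blast
  have SinvS: "inv y \<in> S" if "S \<in> Fx" "y \<in> S" for S y
  proof -
    have "S = m_inv G ` S" using that unfolding Fx_def subset_inv_def by blast
    thus ?thesis using that by blast
  qed
  have SG: "S \<subseteq> carrier G" if "S \<in> Fx" for S using that unfolding Fx_def by blast
  have Sp: "x \<in> S \<longleftrightarrow> p x \<in> S" if "S \<in> Fx" "x \<in> carrier G" for S x
    using that unfolding Fx_def by blast
  have Einv: "(x, inv x) \<in> E" if x: "x \<in> carrier G" for x
  proof -
    have "\<forall>S\<in>Fx. x \<in> S \<longleftrightarrow> inv x \<in> S"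
    proof
      fix S assume S: "S \<in> Fx"
      show "x \<in> S \<longleftrightarrow> inv x \<in> S"
      proof
        assume "x \<in> S" thus "inv x \<in> S" using SinvS[OF S] by blast
      next
        assume "inv x \<in> S" hence "inv (inv x) \<in> S" using SinvS[OF S] by blast
        thus "x \<in> S" using x by simp
      qed
    qed
    thus ?thesis unfolding E_def using x by simp
  qed
  have Ep: "(x, p x) \<in> E" if x: "x \<in> carrier G" for x
    unfolding E_def using x pG Sp by simp
  have Epi: "(x, inv (p x)) \<in> E" if x: "x \<in> carrier G" for x
  proof -
    have "(p x, inv (p x)) \<in> E" using Einv pG x by blast
    thus ?thesis using Ep[OF x] eq unfolding equiv_def trans_def by blast
  qed
  have fcls: "finite (E``{x})" for x using finite_subset[OF _ fin, of "E``{x}"] unfolding E_def by blast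
  have xcls: "(x, x) \<in> E" if "x \<in> carrier G" for x using eq that unfolding equiv_def refl_on_def by blast
  have inj: "inj_on (\<lambda>S. {C\<in>P. C \<subseteq> S}) Fx"
  proof (rule inj_onI)
    fix S1 S2 assume S1: "S1 \<in> Fx" and S2: "S2 \<in> Fx" and e: "{C\<in>P. C \<subseteq> S1} = {C\<in>P. C \<subseteq> S2}"
    have rec: "S = \<Union>{C\<in>P. C \<subseteq> S}" if S: "S \<in> Fx" for S
    proof
      show "S \<subseteq> \<Union>{C\<in>P. C \<subseteq> S}"
      proof
        fix x assume xS: "x \<in> S"
        have xG: "x \<in> carrier G" using xS SG[OF S] by blast
        have "E``{x} \<in> P" unfolding P_def using xG quotientI by metis
        moreover have "E``{x} \<subseteq> S" using xS S unfolding E_def by blast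
        moreover have "x \<in> E``{x}" using xcls[OF xG] by blast
        ultimately show "x \<in> \<Union>{C\<in>P. C \<subseteq> S}" by blast
      qed
    qed blast
    show "S1 = S2" using rec[OF S1] rec[OF S2] e by simp
  qed
  have "card Fx \<le> card (Pow P)"
    using card_inj_on_le[OF inj _ finite_Pow_iff[THEN iffD2, OF fP]] by blast
  hence cFx: "real (card Fx) \<le> 2 powr real (card P)"
    using card_Pow[OF fP] by (simp add: powr_realpow)
  have pt: "1 / real (card (E``{x})) \<le> (if x \<otimes> x = \<one> then 1 else 1/2) - (if x \<in> M then 1/4 else 0)"
    if x: "x \<in> carrier G" for x
  proof -
    have c1: "card (E``{x}) \<ge> 1" using xcls[OF x] fcls card_gt_0_iff by (metis ImageI One_nat_def Suc_leI empty_iff singletonI)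
    have sub2: "{x, inv x} \<subseteq> E``{x}" using xcls[OF x] Einv[OF x] by blast
    show ?thesis
    proof (cases "x \<in> M")
      case False
      show ?thesis
      proof (cases "x \<otimes> x = \<one>")
        case True thus ?thesis using False c1 by simp
      next
        case nx: False
        have "x \<noteq> inv x" using nx x r_inv[OF x] by metis
        hence "card {x, inv x} = 2" by simp
        hence "card (E``{x}) \<ge> 2" using card_mono[OF fcls sub2] by simp
        hence "1 / real (card (E``{x})) \<le> 1 / 2" by (intro divide_left_mono) auto
        thus ?thesis using False nx by simp
      qed
    next
      case True
      hence px: "p x \<noteq> x" "p x \<noteq> inv x" unfolding M_def by blast+
      have pxG: "p x \<in> carrier G" using pG x .
      show ?thesis
      proof (cases "x \<otimes> x = \<one>")
        case xx: True
        have "{x, p x} \<subseteq> E``{x}" using xcls[OF x] Ep[OF x] by blast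
        moreover have "card {x, p x} = 2" using px by simp
        ultimately have "card (E``{x}) \<ge> 2" using card_mono[OF fcls] by metis
        hence "1 / real (card (E``{x})) \<le> 1 / 2" by (intro divide_left_mono) auto
        thus ?thesis using True xx by simp
      next
        case nx: False
        have xi: "x \<noteq> inv x" using nx x r_inv[OF x] by metis
        have ppi: "p x \<noteq> inv (p x)"
        proof
          assume "p x = inv (p x)"
          hence "p x \<otimes> p x = \<one>" using r_inv[OF pxG] by metis
          hence "p (x \<otimes> x) = p \<one>" using hom_mult[OF p x x] hb_one[OF p] by simp
          hence "x \<otimes> x = \<one>" using pinj x by (simp add: inj_on_def)
          thus False using nx by simp
        qed
        have pix: "inv (p x) \<noteq> x" using px(2) pxG x by (metis inv_inv)
        have pii: "inv (p x) \<noteq> inv x" using px(1) pxG x by (metis inv_inv)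
        have "{x, inv x, p x, inv (p x)} \<subseteq> E``{x}" using xcls[OF x] Einv[OF x] Ep[OF x] Epi[OF x] by blast
        moreover have "card {x, inv x, p x, inv (p x)} = 4" using xi px ppi pix pii by auto
        ultimately have "card (E``{x}) \<ge> 4" using card_mono[OF fcls] by metis
        hence "1 / real (card (E``{x})) \<le> 1 / 4" by (intro divide_left_mono) auto
        thus ?thesis using True nx by simp
      qed
    qed
  qed
  have "real (card P) = (\<Sum>x\<in>carrier G. 1 / real (card (E``{x})))"
    unfolding P_def using quot_sum[OF eq fin] .
  also have "\<dots> \<le> (\<Sum>x\<in>carrier G. (if x \<otimes> x = \<one> then 1 else 1/2) - (if x \<in> M then 1/4 else 0))"
    by (rule sum_mono) (rule pt)
  also have "\<dots> = c_num G - real (card M) / 4"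
  proof -
    have s1: "(\<Sum>x\<in>carrier G. (if x \<otimes> x = \<one> then 1 else 1/2::real)) = (\<Sum>x\<in>carrier G. 1/2 + (if x \<otimes> x = \<one> then 1/2 else 0))"
      by (rule sum.cong) auto
    also have "\<dots> = real (card (carrier G)) / 2 + real (card (invol_set G)) / 2"
      unfolding invol_set_def using sum.inter_filter[OF fin, of "\<lambda>_. 1/2::real" "\<lambda>x. x \<otimes> x = \<one>"]
      by (simp add: sum.distrib)
    finally have A: "(\<Sum>x\<in>carrier G. (if x \<otimes> x = \<one> then 1 else 1/2::real)) = c_num G"
      unfolding c_num_def by simp
    have Meq: "{x\<in>carrier G. x \<in> M} = M" unfolding M_def by blast
    have "(\<Sum>x\<in>carrier G. (if x \<in> M then 1/4 else 0::real)) = (\<Sum>x\<in>{x\<in>carrier G. x \<in> M}. 1/4)"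
      by (rule sum.inter_filter[OF fin, symmetric])
    hence B: "(\<Sum>x\<in>carrier G. (if x \<in> M then 1/4 else 0::real)) = real (card M) / 4"
      unfolding Meq by simp
    show ?thesis using A B by (simp add: sum_subtractf)
  qed
  finally have "real (card P) \<le> c_num G - real (card M) / 4" .
  hence "2 powr real (card P) \<le> 2 powr (c_num G - real (card M) / 4)" by simp
  thus ?thesis using cFx unfolding Fx_def M_def by linarith
qed

end


context group begin

lemma gen_step:
  assumes fin: "finite (carrier G)" and gs: "set gs \<subseteq> carrier G"
    and le: "2 ^ length gs \<le> card (generate G (set gs))"
  shows "\<exists>hs. set hs \<subseteq> carrier G \<and> 2 ^ length hs \<le> card (generate G (set hs))
           \<and> generate G (set hs) = carrier G"
  using gs le
proof (induction "card (carrier G) - card (generate G (set gs))" arbitrary: gs rule: less_induct)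
  case less
  show ?case
  proof (cases "generate G (set gs) = carrier G")
    case True thus ?thesis using less.prems by blast
  next
    case False
    have Hsub: "subgroup (generate G (set gs)) G" using generate_is_subgroup[OF less.prems(1)] .
    have HG: "generate G (set gs) \<subseteq> carrier G" using generate_incl[OF less.prems(1)] .
    then obtain g where g: "g \<in> carrier G" "g \<notin> generate G (set gs)" using False by blast
    have gs': "set (g # gs) \<subseteq> carrier G" using g less.prems(1) by simp
    have H'sub: "subgroup (generate G (set (g # gs))) G" using generate_is_subgroup[OF gs'] .
    have H'G: "generate G (set (g # gs)) \<subseteq> carrier G" using generate_incl[OF gs'] .
    have incl: "generate G (set gs) \<subseteq> generate G (set (g # gs))" by (rule mono_generate) auto
    have gin: "g \<in> generate G (set (g # gs))" by (rule generate.incl) simp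
    have fH': "finite (generate G (set (g # gs)))" using finite_subset[OF H'G fin] .
    have ne: "generate G (set gs) \<noteq> generate G (set (g # gs))" using g gin by blast
    have cdvd: "card (generate G (set gs)) dvd card (generate G (set (g # gs)))"
      using sub_dvd[OF Hsub H'sub incl] .
    have "card (generate G (set gs)) \<noteq> card (generate G (set (g # gs)))"
      using card_subset_eq[OF fH' incl] ne by blast
    moreover have "card (generate G (set gs)) \<le> card (generate G (set (g # gs)))"
      using card_mono[OF fH' incl] .
    moreover have "card (generate G (set gs)) > 0"
    proof -
      have "\<one> \<in> generate G (set gs)" by (rule generate.one)
      moreover have "finite (generate G (set gs))" using finite_subset[OF HG fin] .
      ultimately show ?thesis using card_gt_0_iff by blast
    qed
    ultimately have "2 * card (generate G (set gs)) \<le> card (generate G (set (g # gs)))"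
    proof -
      assume a1: "card (generate G (set gs)) \<noteq> card (generate G (set (g # gs)))"
        and a2: "card (generate G (set gs)) \<le> card (generate G (set (g # gs)))"
        and a3: "card (generate G (set gs)) > 0"
      obtain q where q: "card (generate G (set (g # gs))) = card (generate G (set gs)) * q"
        using cdvd by (auto elim: dvdE)
      have "q \<noteq> 1" using q a1 by auto
      moreover have "q \<noteq> 0" using q a2 a3 by auto
      ultimately have "q \<ge> 2" by linarith
      hence "card (generate G (set gs)) * 2 \<le> card (generate G (set gs)) * q" by simp
      thus ?thesis using q by linarith
    qed
    hence le': "2 ^ length (g # gs) \<le> card (generate G (set (g # gs)))" using less.prems(2) by simp
    have "card (generate G (set (g # gs))) \<le> card (carrier G)" using card_mono[OF fin H'G] .
    moreover have "card (generate G (set gs)) < card (generate G (set (g # gs)))"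
      using \<open>card (generate G (set gs)) \<noteq> _\<close> \<open>card (generate G (set gs)) \<le> _\<close> by linarith
    ultimately have "card (carrier G) - card (generate G (set (g # gs))) < card (carrier G) - card (generate G (set gs))"
      by linarith
    thus ?thesis using less.hyps gs' le' by blast
  qed
qed

lemma gen_exists:
  assumes fin: "finite (carrier G)"
  shows "\<exists>gs. set gs \<subseteq> carrier G \<and> 2 ^ length gs \<le> card (carrier G) \<and> generate G (set gs) = carrier G"
proof -
  have "2 ^ length ([]::'a list) \<le> card (generate G (set []))" using generate_empty by simp
  from gen_step[OF fin _ this] show ?thesis by auto
qed

lemma hom_count:
  assumes fin: "finite (carrier G)"
  shows "\<exists>k. 2 ^ k \<le> card (carrier G) \<and>
     card {p. p \<in> extensional (carrier G) \<and> p \<in> hom G G} \<le> card (carrier G) ^ k"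
proof -
  obtain gs where gs: "set gs \<subseteq> carrier G" "2 ^ length gs \<le> card (carrier G)" "generate G (set gs) = carrier G"
    using gen_exists[OF fin] by blast
  define HOMS where "HOMS = {p. p \<in> extensional (carrier G) \<and> p \<in> hom G G}"
  have inj: "inj_on (\<lambda>p. map p gs) HOMS"
  proof (rule inj_onI)
    fix p q assume p: "p \<in> HOMS" and q: "q \<in> HOMS" and e: "map p gs = map q gs"
    have ph: "p \<in> hom G G" and qh: "q \<in> hom G G" using p q unfolding HOMS_def by blast+
    define Eq where "Eq = {x\<in>carrier G. p x = q x}"
    have Esub: "subgroup Eq G"
    proof (rule subgroupI)
      show "Eq \<subseteq> carrier G" unfolding Eq_def by blast
      have "p \<one> = q \<one>" using hb_one[OF ph] hb_one[OF qh] by simp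
      thus "Eq \<noteq> {}" unfolding Eq_def by blast
    next
      fix x assume "x \<in> Eq" thus "inv x \<in> Eq" unfolding Eq_def using hb_inv[OF ph] hb_inv[OF qh] by simp
    next
      fix x y assume "x \<in> Eq" "y \<in> Eq"
      thus "x \<otimes> y \<in> Eq" unfolding Eq_def using hom_mult[OF ph] hom_mult[OF qh] by simp
    qed
    have "set gs \<subseteq> Eq" unfolding Eq_def using gs(1) e by (auto simp: map_eq_conv)
    hence "generate G (set gs) \<subseteq> Eq" using generate_subgroup_incl[OF _ Esub] by blast
    hence all: "\<forall>x\<in>carrier G. p x = q x" using gs(3) unfolding Eq_def by blast
    show "p = q"
    proof
      fix x show "p x = q x"
      proof (cases "x \<in> carrier G")
        case True thus ?thesis using all by blast
      next
        case False
        have pe: "p \<in> extensional (carrier G)" and qe: "q \<in> extensional (carrier G)"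
          using p q unfolding HOMS_def by blast+
        have "p x = undefined" by (rule extensional_arb[OF pe False])
        moreover have "q x = undefined" by (rule extensional_arb[OF qe False])
        ultimately show ?thesis by simp
      qed
    qed
  qed
  have im: "(\<lambda>p. map p gs) ` HOMS \<subseteq> {xs. set xs \<subseteq> carrier G \<and> length xs = length gs}"
  proof
    fix xs assume "xs \<in> (\<lambda>p. map p gs) ` HOMS"
    then obtain p where p: "p \<in> HOMS" and xs: "xs = map p gs" by blast
    have "p \<in> hom G G" using p unfolding HOMS_def by blast
    thus "xs \<in> {xs. set xs \<subseteq> carrier G \<and> length xs = length gs}"
      unfolding xs using gs(1) hb_closed by auto
  qed
  have "card HOMS \<le> card {xs. set xs \<subseteq> carrier G \<and> length xs = length gs}"
    using card_inj_on_le[OF inj im] finite_lists_length_eq[OF fin] by blast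
  also have "\<dots> = card (carrier G) ^ length gs" using card_lists_length_eq[OF fin] .
  finally show ?thesis using gs(2) unfolding HOMS_def by blast
qed

end


context group begin

lemma norm_aut:
  assumes fN: "f \<in> cay_normalizer G S" and nreg: "f \<notin> reg_rep G" and SG: "S \<subseteq> carrier G"
  shows "\<exists>p. p \<in> extensional (carrier G) \<and> p \<in> hom G G \<and> inj_on p (carrier G)
            \<and> (\<exists>x\<in>carrier G. p x \<noteq> x) \<and> (\<forall>x\<in>carrier G. x \<in> S \<longleftrightarrow> p x \<in> S)"
proof -
  have fA: "f \<in> cay_aut G S" and nor: "(\<lambda>q. f \<circ> q \<circ> inv_into UNIV f) ` reg_rep G = reg_rep G"
    using fN unfolding cay_normalizer_def by blast+
  have bij: "bij_betw f (carrier G) (carrier G)" and off: "\<forall>x. x \<notin> carrier G \<longrightarrow> f x = x"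
    and arc: "\<forall>g\<in>carrier G. \<forall>h\<in>carrier G. (h \<otimes> inv g \<in> S) \<longleftrightarrow> (f h \<otimes> inv (f g) \<in> S)"
    using fA unfolding cay_aut_def by blast+
  have fG: "f x \<in> carrier G" if "x \<in> carrier G" for x using bij that bij_betwE by blast
  have injC: "inj_on f (carrier G)" using bij bij_betw_def by blast
  have injf: "inj f"
  proof (rule injI)
    fix x y assume e: "f x = f y"
    show "x = y"
    proof (cases "x \<in> carrier G")
      case True
      show ?thesis
      proof (cases "y \<in> carrier G")
        case True thus ?thesis using \<open>x \<in> carrier G\<close> injC e inj_on_def by metis
      next
        case False hence "f y = y" using off by blast
        thus ?thesis using e fG[OF \<open>x \<in> carrier G\<close>] False by simp
      qed
    next
      case xn: False hence fx: "f x = x" using off by blast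
      show ?thesis
      proof (cases "y \<in> carrier G")
        case True thus ?thesis using e fx fG[OF True] xn by simp
      next
        case False hence "f y = y" using off by blast
        thus ?thesis using e fx by simp
      qed
    qed
  qed
  have finv: "inv_into UNIV f (f x) = x" for x using inv_into_f_f[OF injf] by simp
  have f1G: "f \<one> \<in> carrier G" using fG by simp
  have mulf: "f (x \<otimes> r) = f x \<otimes> inv (f \<one>) \<otimes> f r" if x: "x \<in> carrier G" and r: "r \<in> carrier G" for x r
  proof -
    have "rreg G r \<in> reg_rep G" unfolding reg_rep_def using r by blast
    hence "f \<circ> rreg G r \<circ> inv_into UNIV f \<in> reg_rep G" using nor by blast
    then obtain s where s: "s \<in> carrier G" and fs: "f \<circ> rreg G r \<circ> inv_into UNIV f = rreg G s"
      unfolding reg_rep_def by blast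
    have ev: "f (y \<otimes> r) = f y \<otimes> s" if y: "y \<in> carrier G" for y
    proof -
      have "(f \<circ> rreg G r \<circ> inv_into UNIV f) (f y) = rreg G s (f y)" using fs by simp
      thus ?thesis using y r fG[OF y] finv unfolding rreg_def by simp
    qed
    have "f r = f \<one> \<otimes> s" using ev[of \<one>] r by simp
    hence "s = inv (f \<one>) \<otimes> f r" using f1G s fG[OF r] by (simp add: m_assoc[symmetric])
    thus ?thesis using ev[OF x] x r f1G fG by (simp add: m_assoc)
  qed
  define p where "p = (\<lambda>x\<in>carrier G. f x \<otimes> inv (f \<one>))"
  have pG: "p x = f x \<otimes> inv (f \<one>)" if "x \<in> carrier G" for x using that unfolding p_def by simp
  have ph: "p \<in> hom G G"
  proof (rule homI)
    fix x assume "x \<in> carrier G" thus "p x \<in> carrier G" using pG fG f1G by simp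
  next
    fix x y assume x: "x \<in> carrier G" and y: "y \<in> carrier G"
    have "p (x \<otimes> y) = f x \<otimes> inv (f \<one>) \<otimes> f y \<otimes> inv (f \<one>)" using pG x y mulf[OF x y] by simp
    also have "\<dots> = p x \<otimes> p y" using pG x y fG f1G by (simp add: m_assoc)
    finally show "p (x \<otimes> y) = p x \<otimes> p y" .
  qed
  have pinj: "inj_on p (carrier G)"
  proof (rule inj_onI)
    fix x y assume x: "x \<in> carrier G" and y: "y \<in> carrier G" and e: "p x = p y"
    hence "f x = f y" using pG fG f1G by simp
    thus "x = y" using injC x y inj_on_def by metis
  qed
  have pS: "\<forall>x\<in>carrier G. x \<in> S \<longleftrightarrow> p x \<in> S"
  proof
    fix x assume x: "x \<in> carrier G"
    have "(x \<otimes> inv \<one> \<in> S) \<longleftrightarrow> (f x \<otimes> inv (f \<one>) \<in> S)" using arc x by blast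
    thus "x \<in> S \<longleftrightarrow> p x \<in> S" using x pG by simp
  qed
  have pnt: "\<exists>x\<in>carrier G. p x \<noteq> x"
  proof (rule ccontr)
    assume "\<not> ?thesis"
    hence pid: "\<forall>x\<in>carrier G. p x = x" by blast
    have "f = rreg G (f \<one>)"
    proof
      fix x show "f x = rreg G (f \<one>) x"
      proof (cases "x \<in> carrier G")
        case True
        have "f x \<otimes> inv (f \<one>) = x" using pid pG True by simp
        hence "f x = x \<otimes> f \<one>" using True fG f1G by (metis inv_solve_right')
        thus ?thesis unfolding rreg_def using True by simp
      next
        case False thus ?thesis unfolding rreg_def using off by simp
      qed
    qed
    hence "f \<in> reg_rep G" unfolding reg_rep_def using f1G by blast
    thus False using nreg by simp
  qed
  have "p \<in> extensional (carrier G)" unfolding p_def by simp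
  thus ?thesis using ph pinj pnt pS by blast
qed

end



theorem proposition2p5:
  fixes R :: "('a, 'b) monoid_scheme"
  assumes "group R" and "finite (carrier R)"
    and "\<not> abelian_exp_gt2 R" and "\<not> gen_dicyclic R"
  shows "real (card {S. S \<subseteq> carrier R \<and> S = subset_inv R S
                    \<and> reg_rep R \<subset> cay_normalizer R S})
         \<le> 2 powr (c_num R - real (card (carrier R)) / 96
                    + (log 2 (real (card (carrier R))))\<^sup>2)"
proof -
  interpret group R by fact
  note fin = assms(2)
  define n where "n = card (carrier R)"
  define Sset where "Sset = {S. S \<subseteq> carrier R \<and> S = subset_inv R S \<and> reg_rep R \<subset> cay_normalizer R S}"
  define Fx where "Fx = (\<lambda>p. {S. S \<subseteq> carrier R \<and> S = subset_inv R S \<and> (\<forall>x\<in>carrier R. x \<in> S \<longleftrightarrow> p x \<in> S)})"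
  define HOMS where "HOMS = {p. p \<in> extensional (carrier R) \<and> p \<in> hom R R}"
  define BAD where "BAD = {p. p \<in> extensional (carrier R) \<and> p \<in> hom R R \<and> inj_on p (carrier R) \<and> (\<exists>x\<in>carrier R. p x \<noteq> x)}"
  define Xb where "Xb = 2 powr (c_num R - real n / 96)"
  have n0: "n > 0" unfolding n_def using fin card_gt_0_iff by blast
  have BH: "BAD \<subseteq> HOMS" unfolding BAD_def HOMS_def by blast
  have fH: "finite HOMS"
  proof -
    have "HOMS \<subseteq> (carrier R \<rightarrow>\<^sub>E carrier R)"
    proof
      fix p assume "p \<in> HOMS"
      hence pe: "p \<in> extensional (carrier R)" and ph: "p \<in> hom R R" unfolding HOMS_def by blast+
      have "p \<in> carrier R \<rightarrow> carrier R" using ph unfolding hom_def by blast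
      thus "p \<in> carrier R \<rightarrow>\<^sub>E carrier R" using pe unfolding PiE_def by blast
    qed
    moreover have "finite (carrier R \<rightarrow>\<^sub>E carrier R)" by (rule finite_PiE) (use fin in auto)
    ultimately show ?thesis by (rule finite_subset)
  qed
  have fB: "finite BAD" using finite_subset[OF BH fH] .
  have cover: "Sset \<subseteq> (\<Union>p\<in>BAD. Fx p)"
  proof
    fix S assume S: "S \<in> Sset"
    hence SG: "S \<subseteq> carrier R" and Sinv: "S = subset_inv R S" and lt: "reg_rep R \<subset> cay_normalizer R S"
      unfolding Sset_def by blast+
    obtain f where fN: "f \<in> cay_normalizer R S" and nreg: "f \<notin> reg_rep R" using lt by blast
    obtain p where p: "p \<in> extensional (carrier R)" "p \<in> hom R R" "inj_on p (carrier R)"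
      "\<exists>x\<in>carrier R. p x \<noteq> x" "\<forall>x\<in>carrier R. x \<in> S \<longleftrightarrow> p x \<in> S"
      using norm_aut[OF fN nreg SG] by blast
    have "p \<in> BAD" unfolding BAD_def using p by blast
    moreover have "S \<in> Fx p" unfolding Fx_def using SG Sinv p(5) by blast
    ultimately show "S \<in> (\<Union>p\<in>BAD. Fx p)" by blast
  qed
  have each: "real (card (Fx p)) \<le> Xb" if p: "p \<in> BAD" for p
  proof -
    have ph: "p \<in> hom R R" and pinj: "inj_on p (carrier R)" and pnt: "\<exists>x\<in>carrier R. p x \<noteq> x"
      using p unfolding BAD_def by blast+
    have "\<not> 16 * card {x\<in>carrier R. p x \<noteq> x \<and> p x \<noteq> inv\<^bsub>R\<^esub> x} < card (carrier R)"
      using key[OF fin ph pnt] assms(3,4) by blast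
    hence "real n \<le> 16 * real (card {x\<in>carrier R. p x \<noteq> x \<and> p x \<noteq> inv\<^bsub>R\<^esub> x})" unfolding n_def by linarith
    hence le: "c_num R - real (card {x\<in>carrier R. p x \<noteq> x \<and> p x \<noteq> inv\<^bsub>R\<^esub> x}) / 4 \<le> c_num R - real n / 96"
      using n0 by linarith
    have "real (card (Fx p)) \<le> 2 powr (c_num R - real (card {x\<in>carrier R. p x \<noteq> x \<and> p x \<noteq> inv\<^bsub>R\<^esub> x}) / 4)"
      unfolding Fx_def using fix_count[OF fin ph pinj] .
    also have "\<dots> \<le> Xb" unfolding Xb_def using le by simp
    finally show ?thesis .
  qed
  have "card Sset \<le> card (\<Union>p\<in>BAD. Fx p)"
  proof (rule card_mono[OF _ cover])
    have "\<forall>p. Fx p \<subseteq> Pow (carrier R)" unfolding Fx_def by blast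
    hence "(\<Union>p\<in>BAD. Fx p) \<subseteq> Pow (carrier R)" by blast
    moreover have "finite (Pow (carrier R))" using fin by simp
    ultimately show "finite (\<Union>p\<in>BAD. Fx p)" by (rule finite_subset)
  qed
  also have "\<dots> \<le> (\<Sum>p\<in>BAD. card (Fx p))" by (rule card_UN_le[OF fB])
  finally have "card Sset \<le> (\<Sum>p\<in>BAD. card (Fx p))" .
  hence "real (card Sset) \<le> real (\<Sum>p\<in>BAD. card (Fx p))" by (rule of_nat_mono)
  also have "\<dots> = (\<Sum>p\<in>BAD. real (card (Fx p)))" by (rule of_nat_sum)
  also have "\<dots> \<le> (\<Sum>p\<in>BAD. Xb)" by (rule sum_mono) (rule each)
  also have "\<dots> = real (card BAD) * Xb" by simp
  also have "\<dots> \<le> real (card HOMS) * Xb"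
    using card_mono[OF fH BH] unfolding Xb_def by (intro mult_right_mono) auto
  finally have A: "real (card Sset) \<le> real (card HOMS) * Xb" .
  obtain k where k: "2 ^ k \<le> n" "card HOMS \<le> n ^ k" using hom_count[OF fin] unfolding HOMS_def n_def by blast
  have lk: "real k \<le> log 2 (real n)"
  proof -
    have "2 powr real k = real (2 ^ k)" by (simp add: powr_realpow)
    also have "\<dots> \<le> real n" using k(1) by linarith
    finally show ?thesis using le_log_iff[of 2 "real n" "real k"] n0 by simp
  qed
  have lg0: "log 2 (real n) \<ge> 0" using n0 by simp
  have "real (card HOMS) \<le> real n ^ k" using k(2) by (metis of_nat_le_iff of_nat_power)
  also have "\<dots> = (2 powr log 2 (real n)) ^ k" using n0 by simp
  also have "\<dots> = 2 powr (log 2 (real n) * real k)" by (simp add: powr_realpow[symmetric] powr_powr)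
  also have "\<dots> \<le> 2 powr ((log 2 (real n))\<^sup>2)"
    using mult_left_mono[OF lk lg0] by (simp add: power2_eq_square)
  finally have B: "real (card HOMS) \<le> 2 powr ((log 2 (real n))\<^sup>2)" .
  have "real (card Sset) \<le> 2 powr ((log 2 (real n))\<^sup>2) * Xb"
    using A B unfolding Xb_def by (meson mult_right_mono order_trans powr_ge_zero)
  also have "\<dots> = 2 powr (c_num R - real n / 96 + (log 2 (real n))\<^sup>2)"
    unfolding Xb_def by (simp add: powr_add[symmetric] add.commute)
  finally show ?thesis unfolding Sset_def n_def .
qed


end
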